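(* Let $A$ and $B$ be automata. (1) If $B$ is deterministic and $A\le_B B$, then $A\le_R B$. (2) If all states of $A$ are reachable, $B$ has finite invisible nondeterminism, and $A\le_B B$, then $A\le_{iB}B$.
   Context: An automaton $A$ consists of a set $\mathrm{states}(A)$ of states, a nonempty set $\mathrm{start}(A)\subseteq\mathrm{states}(A)$ of start states, a set $\mathrm{acts}(A)$ of actions containing a distinguished internal action $\tau$, and a set $\mathrm{steps}(A)\subseteq\mathrm{states}(A)\times\mathrm{acts}(A)\times\mathrm{states}(A)$ of steps; write $s\xrightarrow{a}_A t$ for $(s,a,t)\in\mathrm{steps}(A)$. An execution fragment of $A$ is a finite or infinite alternating sequence $s_0a_1s_1a_2s_2\cdots$ of states and actions, beginning with a state and, if finite, ending with a state, such that $s_{i-1}\xrightarrow{a_i}_A s_i$ for all $i>0$. An execution is an execution fragment whose first state is a start state. A state is reachable if it is the last state of some finite execution. For states $s,t$ and a finite sequence $\beta$ of non-$\tau$ actions, write $s\stackrel{\beta}{\Rightarrow}_A t$ if $A$ has a finite execution fragment starting in $s$, with trace (subsequence of non-$\tau$ actions) $\beta$, ending in $t$. $A$ is deterministic if $|\mathrm{start}(A)|=1$ and for every state $s$ and finite sequence $\beta$ of non-$\tau$ actions there is at most one $t$ with $s\stackrel{\beta}{\Rightarrow}_A t$. $A$ has finite invisible nondeterminism if $\mathrm{start}(A)$ is finite and for every state $s$ and finite sequence $\beta$ of non-$\tau$ actions there are only finitely many $t$ with $s\stackrel{\beta}{\Rightarrow}_A t$. For a relation $R$ write $R[s]=\{u\mid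 (s,u)\in R\}$; $R$ is image-finite if every $R[s]$ is finite. A step refinement from $A$ to $B$ is a partial function $r:\mathrm{states}(A)\rightharpoonup\mathrm{states}(B)$ such that (1) if $s\in\mathrm{start}(A)$ then $s\in\mathrm{dom}(r)$ and $r(s)\in\mathrm{start}(B)$; (2) if $s\xrightarrow{a}_A t$ and $s\in\mathrm{dom}(r)$ then $t\in\mathrm{dom}(r)$ and either $r(s)=r(t)$ and $a=\tau$, or $r(s)\xrightarrow{a}_B r(t)$. Write $A\le_R B$ if one exists. A normed backward simulation from $A$ to $B$ is a pair $(b,n)$ where $b\subseteq\mathrm{states}(A)\times\mathrm{states}(B)$ is total (every $s\in\mathrm{states}(A)$ has $b[s]\neq\emptyset$) and $n:(\mathrm{steps}(A)\cup\mathrm{start}(A))\times\mathrm{states}(B)\to S$ for some set $S$ with a well-founded strict order $<$, such that: (1) if $s\in\mathrm{start}(A)$ and $u\in b[s]$ then (a) $u\in\mathrm{start}(B)$, or (b) there is $v\in b[s]$ with $v\xrightarrow{\tau}_B u$ and $n(s,v)<n(s,u)$; (2) if $t\xrightarrow{a}_A s$ and $u\in b[s]$ then (a) $u\in b[t]$ and $a=\tau$, or (b) there is $v\in b[t]$ with $v\xrightarrow{a}_B u$, or (c) there is $v\in b[s]$ with $v\xrightarrow{\tau}_B u$ and $n(t\xrightarrow{a}s,v)<n(t\xrightarrow{a}s,u)$. Write $A\le_B B$ if one exists and $A\le_{iB}B$ if one exists with $b$ image-finite. *)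

theory Defs
  imports Main
begin

text \<open>Automata. Actions range over a type 'a; the distinguished internal action
  tau is a parameter shared by all automata under consideration.\<close>

record ('s, 'a) automaton =
  states :: "'s set"
  start :: "'s set"
  acts :: "'a set"
  steps :: "('s \<times> 'a \<times> 's) set"

definition is_automaton :: "'a \<Rightarrow> ('s, 'a) automaton \<Rightarrow> bool" where
  "is_automaton tau A \<longleftrightarrow>
     start A \<subseteq> states A \<and> start A \<noteq> {} \<and> tau \<in> acts A \<and>
     steps A \<subseteq> states A \<times> acts A \<times> states A"

text \<open>Finite execution fragment: first state s, followed by the list of (action, state) pairs.\<close>
fun frag_from :: "('s, 'a) automaton \<Rightarrow> 's \<Rightarrow> ('a \<times> 's) list \<Rightarrow> bool" where
  "frag_from A s [] = True"
| "frag_from A s ((a, t) # xs) = ((s, a, t) \<in> steps A \<and> frag_from A t xs)"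

definition is_frag :: "('s, 'a) automaton \<Rightarrow> 's \<Rightarrow> ('a \<times> 's) list \<Rightarrow> bool" where
  "is_frag A s xs \<longleftrightarrow> s \<in> states A \<and> frag_from A s xs"

definition last_state :: "'s \<Rightarrow> ('a \<times> 's) list \<Rightarrow> 's" where
  "last_state s xs = last (s # map snd xs)"

definition trace_of :: "'a \<Rightarrow> ('a \<times> 's) list \<Rightarrow> 'a list" where
  "trace_of tau xs = filter (\<lambda>a. a \<noteq> tau) (map fst xs)"

definition reachable :: "('s, 'a) automaton \<Rightarrow> 's \<Rightarrow> bool" where
  "reachable A s \<longleftrightarrow>
     (\<exists>s0 xs. s0 \<in> start A \<and> is_frag A s0 xs \<and> last_state s0 xs = s)"

definition weak_step :: "'a \<Rightarrow> ('s, 'a) automaton \<Rightarrow> 's \<Rightarrow> 'a list \<Rightarrow> 's \<Rightarrow> bool" where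
  "weak_step tau A s \<beta> t \<longleftrightarrow>
     tau \<notin> set \<beta> \<and>
     (\<exists>xs. is_frag A s xs \<and> trace_of tau xs = \<beta> \<and> last_state s xs = t)"

definition deterministic :: "'a \<Rightarrow> ('s, 'a) automaton \<Rightarrow> bool" where
  "deterministic tau A \<longleftrightarrow>
     card (start A) = 1 \<and>
     (\<forall>s \<in> states A. \<forall>\<beta>. tau \<notin> set \<beta> \<longrightarrow>
        (\<forall>t1 t2. weak_step tau A s \<beta> t1 \<and> weak_step tau A s \<beta> t2 \<longrightarrow> t1 = t2))"

definition fin_invisible_nondet :: "'a \<Rightarrow> ('s, 'a) automaton \<Rightarrow> bool" where
  "fin_invisible_nondet tau A \<longleftrightarrow>
     finite (start A) \<and>
     (\<forall>s \<in> states A. \<forall>\<beta>. tau \<notin> set \<beta> \<longrightarrow> finite {t. weak_step tau A s \<beta> t})"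

definition step_refinement ::
  "'a \<Rightarrow> ('s1, 'a) automaton \<Rightarrow> ('s2, 'a) automaton \<Rightarrow> ('s1 \<Rightarrow> 's2 option) \<Rightarrow> bool" where
  "step_refinement tau A B r \<longleftrightarrow>
     (\<forall>s u. r s = Some u \<longrightarrow> s \<in> states A \<and> u \<in> states B) \<and>
     (\<forall>s \<in> start A. s \<in> dom r \<and> the (r s) \<in> start B) \<and>
     (\<forall>s a t. (s, a, t) \<in> steps A \<and> s \<in> dom r \<longrightarrow>
        t \<in> dom r \<and>
        ((the (r s) = the (r t) \<and> a = tau) \<or> (the (r s), a, the (r t)) \<in> steps B))"

definition leR :: "'a \<Rightarrow> ('s1, 'a) automaton \<Rightarrow> ('s2, 'a) automaton \<Rightarrow> bool" where
  "leR tau A B \<longleftrightarrow> (\<exists>r. step_refinement tau A B r)"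

text \<open>The domain steps(A) \<union> start(A) is encoded in the
  sum type (Inl for steps, Inr for start states); only arguments from that domain
  (and from states(B)) are constrained.\<close>
definition normed_bsim ::
  "'a \<Rightarrow> ('s1, 'a) automaton \<Rightarrow> ('s2, 'a) automaton \<Rightarrow> ('s1 \<times> 's2) set \<Rightarrow>
   (('s1 \<times> 'a \<times> 's1) + 's1 \<Rightarrow> 's2 \<Rightarrow> 'd) \<Rightarrow> ('d \<times> 'd) set \<Rightarrow> bool" where
  "normed_bsim tau A B b n lt \<longleftrightarrow>
     wf lt \<and> trans lt \<and>
     b \<subseteq> states A \<times> states B \<and>
     (\<forall>s \<in> states A. b `` {s} \<noteq> {}) \<and>
     (\<forall>s \<in> start A. \<forall>u \<in> b `` {s}.
        u \<in> start B \<or>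
        (\<exists>v \<in> b `` {s}. (v, tau, u) \<in> steps B \<and> (n (Inr s) v, n (Inr s) u) \<in> lt)) \<and>
     (\<forall>t a s. (t, a, s) \<in> steps A \<longrightarrow> (\<forall>u \<in> b `` {s}.
        (u \<in> b `` {t} \<and> a = tau) \<or>
        (\<exists>v \<in> b `` {t}. (v, a, u) \<in> steps B) \<or>
        (\<exists>v \<in> b `` {s}. (v, tau, u) \<in> steps B \<and>
            (n (Inl (t, a, s)) v, n (Inl (t, a, s)) u) \<in> lt)))"

text \<open>Since the norm only matters on its image, which has cardinality at most that of
  its domain, the existential over the set S may, without loss of generality, be taken
  over the type of the domain of n itself.\<close>
type_synonym ('s1, 'a, 's2) norm_val = "(('s1 \<times> 'a \<times> 's1) + 's1) \<times> 's2"

definition leB :: "'a \<Rightarrow> ('s1, 'a) automaton \<Rightarrow> ('s2, 'a) automaton \<Rightarrow> bool" where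
  "leB tau A B \<longleftrightarrow>
     (\<exists>b (n :: ('s1 \<times> 'a \<times> 's1) + 's1 \<Rightarrow> 's2 \<Rightarrow> ('s1, 'a, 's2) norm_val) lt.
        normed_bsim tau A B b n lt)"

definition leiB :: "'a \<Rightarrow> ('s1, 'a) automaton \<Rightarrow> ('s2, 'a) automaton \<Rightarrow> bool" where
  "leiB tau A B \<longleftrightarrow>
     (\<exists>b (n :: ('s1 \<times> 'a \<times> 's1) + 's1 \<Rightarrow> 's2 \<Rightarrow> ('s1, 'a, 's2) norm_val) lt.
        normed_bsim tau A B b n lt \<and> (\<forall>s. finite (b `` {s})))"

end

theory Submission
  imports Defs
begin

lemma frag_from_append:
  "frag_from A s (xs @ ys) = (frag_from A s xs \<and> frag_from A (last_state s xs) ys)"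
  by (induction xs arbitrary: s) (auto simp: last_state_def)

lemma last_state_snoc: "last_state s (xs @ [(a, t)]) = t"
  by (simp add: last_state_def)

lemma trace_snoc: "trace_of tau (xs @ [(a, t)]) = (if a = tau then trace_of tau xs else trace_of tau xs @ [a])"
  by (simp add: trace_of_def)

lemma tau_notin_trace: "tau \<notin> set (trace_of tau xs)"
  by (simp add: trace_of_def)

lemma last_in_states:
  assumes "is_automaton tau A" "is_frag A s xs"
  shows "last_state s xs \<in> states A"
  using assms(2)
proof (induction xs arbitrary: s)
  case Nil then show ?case by (simp add: is_frag_def last_state_def)
next
  case (Cons p xs)
  obtain a t where p: "p = (a, t)" by (cases p)
  have "(s, a, t) \<in> steps A" "frag_from A t xs" using Cons.prems p by (auto simp: is_frag_def)
  then have "t \<in> states A" using assms(1) by (auto simp: is_automaton_def)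
  then have "last_state t xs \<in> states A" using Cons.IH \<open>frag_from A t xs\<close> by (simp add: is_frag_def)
  then show ?case using p by (simp add: last_state_def)
qed

lemma ws_refl: "u \<in> states B \<Longrightarrow> weak_step tau B u [] u"
  unfolding weak_step_def
  by (rule conjI, simp, rule exI[of _ "[]"]) (simp add: is_frag_def trace_of_def last_state_def)

lemma ws_ext:
  assumes "weak_step tau B u0 \<beta> v" "(v, a, u) \<in> steps B"
  shows "weak_step tau B u0 (if a = tau then \<beta> else \<beta> @ [a]) u"
proof -
  obtain xs where xs: "is_frag B u0 xs" "trace_of tau xs = \<beta>" "last_state u0 xs = v" "tau \<notin> set \<beta>"
    using assms(1) unfolding weak_step_def by blast
  have "is_frag B u0 (xs @ [(a, u)])"
    using xs assms(2) by (simp add: is_frag_def frag_from_append)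
  moreover have "trace_of tau (xs @ [(a, u)]) = (if a = tau then \<beta> else \<beta> @ [a])"
    using xs by (simp add: trace_snoc)
  moreover have "tau \<notin> set (if a = tau then \<beta> else \<beta> @ [a])" using xs by simp
  ultimately show ?thesis unfolding weak_step_def
    by (metis last_state_snoc)
qed

lemma soundness:
  assumes A: "is_automaton tau A" and B: "is_automaton tau B"
    and bs: "normed_bsim tau A B b n lt"
    and s0: "s0 \<in> start A" and fr: "is_frag A s0 xs"
  shows "\<forall>u \<in> b `` {last_state s0 xs}. \<exists>u0 \<in> start B. weak_step tau B u0 (trace_of tau xs) u"
  using fr
proof (induction xs rule: rev_induct)
  case Nil
  have wf: "wf lt" using bs by (simp add: normed_bsim_def)
  have bsub: "b \<subseteq> states A \<times> states B" using bs by (simp add: normed_bsim_def)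
  have st: "\<forall>u \<in> b `` {s0}. u \<in> start B \<or>
        (\<exists>v \<in> b `` {s0}. (v, tau, u) \<in> steps B \<and> (n (Inr s0) v, n (Inr s0) u) \<in> lt)"
    using bs s0 by (simp add: normed_bsim_def)
  have "\<forall>u. u \<in> b `` {s0} \<longrightarrow> (\<exists>u0 \<in> start B. weak_step tau B u0 [] u)"
  proof -
    have "\<And>k. \<forall>u. n (Inr s0) u = k \<longrightarrow> u \<in> b `` {s0} \<longrightarrow> (\<exists>u0 \<in> start B. weak_step tau B u0 [] u)"
    proof -
      fix k
      show "\<forall>u. n (Inr s0) u = k \<longrightarrow> u \<in> b `` {s0} \<longrightarrow> (\<exists>u0 \<in> start B. weak_step tau B u0 [] u)"
        using wf
      proof (induction k rule: wf_induct_rule)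
        case (less k)
        show ?case
        proof (intro allI impI)
          fix u assume k: "n (Inr s0) u = k" and u: "u \<in> b `` {s0}"
          from st u have "u \<in> start B \<or> (\<exists>v \<in> b `` {s0}. (v, tau, u) \<in> steps B \<and> (n (Inr s0) v, n (Inr s0) u) \<in> lt)" by blast
          then show "\<exists>u0 \<in> start B. weak_step tau B u0 [] u"
          proof
            assume "u \<in> start B"
            then show ?thesis using B by (auto simp: is_automaton_def intro!: ws_refl)
          next
            assume "\<exists>v \<in> b `` {s0}. (v, tau, u) \<in> steps B \<and> (n (Inr s0) v, n (Inr s0) u) \<in> lt"
            then obtain v where v: "v \<in> b `` {s0}" "(v, tau, u) \<in> steps B" "(n (Inr s0) v, k) \<in> lt"
              using k by blast
            then obtain u0 where "u0 \<in> start B" "weak_step tau B u0 [] v" using less by blast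
            then show ?thesis using ws_ext[OF _ v(2)] by fastforce
          qed
        qed
      qed
    qed
    then show ?thesis by blast
  qed
  then show ?case by (simp add: last_state_def trace_of_def)
next
  case (snoc p xs)
  obtain a s where p: "p = (a, s)" by (cases p)
  define t where "t = last_state s0 xs"
  have frx: "is_frag A s0 xs" and stp: "(t, a, s) \<in> steps A"
    using snoc.prems p by (auto simp: is_frag_def frag_from_append t_def)
  have IH: "\<forall>u \<in> b `` {t}. \<exists>u0 \<in> start B. weak_step tau B u0 (trace_of tau xs) u"
    using snoc.IH frx t_def by simp
  have wf: "wf lt" using bs by (simp add: normed_bsim_def)
  let ?N = "n (Inl (t, a, s))"
  let ?\<beta> = "trace_of tau (xs @ [(a, s)])"
  have st: "\<forall>u \<in> b `` {s}.
        (u \<in> b `` {t} \<and> a = tau) \<or>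
        (\<exists>v \<in> b `` {t}. (v, a, u) \<in> steps B) \<or>
        (\<exists>v \<in> b `` {s}. (v, tau, u) \<in> steps B \<and> (?N v, ?N u) \<in> lt)"
    using bs stp unfolding normed_bsim_def by blast
  have "\<And>k. \<forall>u. ?N u = k \<longrightarrow> u \<in> b `` {s} \<longrightarrow> (\<exists>u0 \<in> start B. weak_step tau B u0 ?\<beta> u)"
  proof -
    fix k
    show "\<forall>u. ?N u = k \<longrightarrow> u \<in> b `` {s} \<longrightarrow> (\<exists>u0 \<in> start B. weak_step tau B u0 ?\<beta> u)"
      using wf
    proof (induction k rule: wf_induct_rule)
      case (less k)
      show ?case
      proof (intro allI impI)
        fix u assume k: "?N u = k" and u: "u \<in> b `` {s}"
        from st u consider (a) "u \<in> b `` {t} \<and> a = tau" | (b) "\<exists>v \<in> b `` {t}. (v, a, u) \<in> steps B"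
          | (c) "\<exists>v \<in> b `` {s}. (v, tau, u) \<in> steps B \<and> (?N v, ?N u) \<in> lt" by blast
        then show "\<exists>u0 \<in> start B. weak_step tau B u0 ?\<beta> u"
        proof cases
          case a then show ?thesis using IH by (simp add: trace_snoc)
        next
          case b
          then obtain v where v: "v \<in> b `` {t}" "(v, a, u) \<in> steps B" by blast
          then obtain u0 where "u0 \<in> start B" "weak_step tau B u0 (trace_of tau xs) v" using IH by blast
          then show ?thesis using ws_ext[OF _ v(2)] by (fastforce simp: trace_snoc)
        next
          case c
          then obtain v where v: "v \<in> b `` {s}" "(v, tau, u) \<in> steps B" "(?N v, k) \<in> lt"
            using k by blast
          then obtain u0 where "u0 \<in> start B" "weak_step tau B u0 ?\<beta> v" using less by blast
          then show ?thesis using ws_ext[OF _ v(2)] by fastforce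
        qed
      qed
    qed
  qed
  then show ?case using p by (simp add: last_state_snoc)
qed

theorem mainTheorem10:
  fixes tau :: 'a and A :: "('s1, 'a) automaton" and B :: "('s2, 'a) automaton"
  assumes "is_automaton tau A" and "is_automaton tau B"
  shows "(deterministic tau B \<and> leB tau A B \<longrightarrow> leR tau A B) \<and>
         ((\<forall>s \<in> states A. reachable A s) \<and> fin_invisible_nondet tau B \<and> leB tau A B
            \<longrightarrow> leiB tau A B)"
proof (intro conjI impI)
  assume h: "deterministic tau B \<and> leB tau A B"
  then obtain b and n :: "('s1 \<times> 'a \<times> 's1) + 's1 \<Rightarrow> 's2 \<Rightarrow> ('s1, 'a, 's2) norm_val" and lt
    where bs: "normed_bsim tau A B b n lt" unfolding leB_def by blast
  have wf: "wf lt" using bs by (simp add: normed_bsim_def)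
  have bsub: "b \<subseteq> states A \<times> states B" using bs by (simp add: normed_bsim_def)
  have tot: "\<forall>s \<in> states A. b `` {s} \<noteq> {}" using bs by (simp add: normed_bsim_def)
  have det: "card (start B) = 1" "\<And>s \<beta> t1 t2. s \<in> states B \<Longrightarrow> tau \<notin> set \<beta> \<Longrightarrow>
     weak_step tau B s \<beta> t1 \<Longrightarrow> weak_step tau B s \<beta> t2 \<Longrightarrow> t1 = t2"
    using h unfolding deterministic_def by blast+
  have uniq: "\<exists>!u. (s, u) \<in> b" if r: "reachable A s" for s
  proof -
    obtain s0 xs where x: "s0 \<in> start A" "is_frag A s0 xs" "last_state s0 xs = s"
      using r unfolding reachable_def by blast
    have "s \<in> states A" using last_in_states[OF assms(1) x(2)] x(3) by simp
    then obtain u where u: "(s, u) \<in> b" using tot by blast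
    have snd: "\<forall>u \<in> b `` {s}. \<exists>u0 \<in> start B. weak_step tau B u0 (trace_of tau xs) u"
      using soundness[OF assms bs x(1,2)] x(3) by simp
    have "u' = u" if "(s, u') \<in> b" for u'
    proof -
      obtain u0 where u0: "u0 \<in> start B" "weak_step tau B u0 (trace_of tau xs) u" using snd u by blast
      have "u' \<in> b `` {s}" using \<open>(s, u') \<in> b\<close> by simp
      with snd have "\<exists>u1 \<in> start B. weak_step tau B u1 (trace_of tau xs) u'" by (rule bspec)
      then obtain u1 where u1: "u1 \<in> start B" "weak_step tau B u1 (trace_of tau xs) u'" by (rule bexE)
      obtain x where x: "start B = {x}" using det(1) card_1_singletonE by blast
      have eq: "u1 = u0" using u0(1) u1(1) x by simp
      have "u0 \<in> states B" using assms(2) u0(1) by (auto simp: is_automaton_def)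
      from det(2)[OF this tau_notin_trace u0(2)] u1(2) eq show ?thesis by simp
    qed
    then show ?thesis using u by blast
  qed
  define r where "r s = (if reachable A s then Some (THE u. (s, u) \<in> b) else None)" for s
  have rb: "(s, the (r s)) \<in> b" if rs: "reachable A s" for s
  proof -
    have "(s, THE u. (s, u) \<in> b) \<in> b" by (rule theI'[OF uniq[OF rs]])
    moreover have "the (r s) = (THE u. (s, u) \<in> b)" using rs by (simp add: r_def)
    ultimately show ?thesis by simp
  qed
  have rb2: "reachable A s \<Longrightarrow> (s, u) \<in> b \<Longrightarrow> u = the (r s)" for s u
    using uniq[of s] rb[of s] by blast
  have reach_step: "reachable A t" if rs: "reachable A s" and stp: "(s, a, t) \<in> steps A" for s a t
  proof -
    obtain s0 xs where x: "s0 \<in> start A" "is_frag A s0 xs" "last_state s0 xs = s"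
      using rs unfolding reachable_def by blast
    have "is_frag A s0 (xs @ [(a, t)])" using x stp by (simp add: is_frag_def frag_from_append)
    moreover have "last_state s0 (xs @ [(a, t)]) = t" by (rule last_state_snoc)
    ultimately show ?thesis unfolding reachable_def using x(1) by blast
  qed
  have "step_refinement tau A B r"
    unfolding step_refinement_def
  proof (intro conjI allI ballI impI)
    fix s u assume "r s = Some u"
    then have "reachable A s" "u = the (r s)" by (auto simp: r_def split: if_splits)
    then show "s \<in> states A" "u \<in> states B" using rb bsub by blast+
  next
    fix s assume s: "s \<in> start A"
    have "s \<in> states A" using s assms(1) by (auto simp: is_automaton_def)
    then have "is_frag A s []" "last_state s [] = s" by (simp_all add: is_frag_def last_state_def)
    then have rs: "reachable A s" unfolding reachable_def using s by blast
    then show "s \<in> dom r" by (simp add: r_def dom_def)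
    have "\<forall>u \<in> b `` {s}. u \<in> start B \<or>
        (\<exists>v \<in> b `` {s}. (v, tau, u) \<in> steps B \<and> (n (Inr s) v, n (Inr s) u) \<in> lt)"
      using bs s by (simp add: normed_bsim_def)
    then have "the (r s) \<in> start B \<or> (\<exists>v \<in> b `` {s}. (v, tau, the (r s)) \<in> steps B \<and> (n (Inr s) v, n (Inr s) (the (r s))) \<in> lt)"
      using rb[OF rs] by blast
    then show "the (r s) \<in> start B"
    proof
      assume "\<exists>v \<in> b `` {s}. (v, tau, the (r s)) \<in> steps B \<and> (n (Inr s) v, n (Inr s) (the (r s))) \<in> lt"
      then obtain v where "(s, v) \<in> b" "(n (Inr s) v, n (Inr s) (the (r s))) \<in> lt" by blast
      then show ?thesis using rb2[OF rs] wf_not_refl[OF wf] by metis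
    qed
  next
    fix s a t assume st: "(s, a, t) \<in> steps A \<and> s \<in> dom r"
    then have rs: "reachable A s" by (auto simp: r_def split: if_splits)
    then have rt: "reachable A t" using reach_step st by blast
    then show "t \<in> dom r" by (simp add: r_def dom_def)
    have "\<forall>u \<in> b `` {t}.
        (u \<in> b `` {s} \<and> a = tau) \<or>
        (\<exists>v \<in> b `` {s}. (v, a, u) \<in> steps B) \<or>
        (\<exists>v \<in> b `` {t}. (v, tau, u) \<in> steps B \<and>
            (n (Inl (s, a, t)) v, n (Inl (s, a, t)) u) \<in> lt)"
      using bs st unfolding normed_bsim_def by blast
    then have "(the (r t) \<in> b `` {s} \<and> a = tau) \<or>
        (\<exists>v \<in> b `` {s}. (v, a, the (r t)) \<in> steps B) \<or>
        (\<exists>v \<in> b `` {t}. (v, tau, the (r t)) \<in> steps B \<and>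
            (n (Inl (s, a, t)) v, n (Inl (s, a, t)) (the (r t))) \<in> lt)"
      using rb[OF rt] by blast
    then show "the (r s) = the (r t) \<and> a = tau \<or> (the (r s), a, the (r t)) \<in> steps B"
    proof (elim disjE)
      assume "the (r t) \<in> b `` {s} \<and> a = tau"
      then show ?thesis using rb2[OF rs] by auto
    next
      assume "\<exists>v \<in> b `` {s}. (v, a, the (r t)) \<in> steps B"
      then obtain v where "(s, v) \<in> b" "(v, a, the (r t)) \<in> steps B" by blast
      then show ?thesis using rb2[OF rs] by metis
    next
      assume "\<exists>v \<in> b `` {t}. (v, tau, the (r t)) \<in> steps B \<and>
            (n (Inl (s, a, t)) v, n (Inl (s, a, t)) (the (r t))) \<in> lt"
      then obtain v where "(t, v) \<in> b" "(n (Inl (s, a, t)) v, n (Inl (s, a, t)) (the (r t))) \<in> lt" by blast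
      then show ?thesis using rb2[OF rt] wf_not_refl[OF wf] by metis
    qed
  qed
  then show "leR tau A B" unfolding leR_def by blast
next
  assume h: "(\<forall>s \<in> states A. reachable A s) \<and> fin_invisible_nondet tau B \<and> leB tau A B"
  then obtain b and n :: "('s1 \<times> 'a \<times> 's1) + 's1 \<Rightarrow> 's2 \<Rightarrow> ('s1, 'a, 's2) norm_val" and lt
    where bs: "normed_bsim tau A B b n lt" unfolding leB_def by blast
  have bsub: "b \<subseteq> states A \<times> states B" using bs by (simp add: normed_bsim_def)
  have fin: "finite (start B)" "\<And>s \<beta>. s \<in> states B \<Longrightarrow> tau \<notin> set \<beta> \<Longrightarrow> finite {t. weak_step tau B s \<beta> t}"
    using h unfolding fin_invisible_nondet_def by blast+
  have "finite (b `` {s})" for s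
  proof (cases "s \<in> states A")
    case False
    then have "b `` {s} = {}" using bsub by blast
    then show ?thesis by simp
  next
    case True
    then obtain s0 xs where x: "s0 \<in> start A" "is_frag A s0 xs" "last_state s0 xs = s"
      using h unfolding reachable_def by blast
    have snd: "\<forall>u \<in> b `` {s}. \<exists>u0 \<in> start B. weak_step tau B u0 (trace_of tau xs) u"
      using soundness[OF assms bs x(1,2)] x(3) by simp
    have "b `` {s} \<subseteq> (\<Union>u0 \<in> start B. {t. weak_step tau B u0 (trace_of tau xs) t})"
      using snd by blast
    moreover have "finite (\<Union>u0 \<in> start B. {t. weak_step tau B u0 (trace_of tau xs) t})"
    proof (rule finite_UN_I[OF fin(1)])
      fix u0 assume "u0 \<in> start B"
      then have "u0 \<in> states B" using assms(2) unfolding is_automaton_def by blast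
      then show "finite {t. weak_step tau B u0 (trace_of tau xs) t}" by (rule fin(2)[OF _ tau_notin_trace])
    qed
    ultimately show ?thesis by (rule finite_subset)
  qed
  then show "leiB tau A B" unfolding leiB_def using bs by blast
qed

end
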